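(* Let $T_1$ and $T_2$ be two $L_1$-periodic tilings of type $(\gamma_1,\gamma_2,\gamma_3)$ with $\gamma_1,\gamma_2,\gamma_3>0$. Then $T_1$ and $T_2$ are connected by a sequence of flips.
   Context: Let $u^\top=(1,0)$, $v^\top=-(\tfrac12,\tfrac{\sqrt3}{2})$, $w=-(u+v)$, $L_0=\langle u,v\rangle$, and $L_1\le L_0$ a full-rank sublattice. An $L_1$-periodic tiling (periodic lozenge tiling of the plane) is an $L_1$-invariant map $T\colon L_0\to\{U,V,W\}$ such that for every $x$ exactly one of $T(x)=W$, $T(x+u)=V$, $T(x-v)=U$ holds; $T(x)$ removes one arrow of the upward triangle $x\to x+u\to x-v\to x$ ($U$: $x\to x+u$; $V$: $x-v\to x$; $W$: $x+u\to x-v$), and the remaining arrows are said to be in $T$. The type of $T$ counts the values $U,V,W$ over $L_0/L_1$. A source (resp. sink) of $T$ is a point where no arrow in $T$ ends (resp. starts), i.e. three lozenges of three different types meet there. A flip at a source or sink $z$ replaces the three lozenges meeting at each point of $z+L_1$ by the opposite configuration (turning sources into sinks and vice versa); it preserves the type. *)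

theory Defs
  imports Main
begin

text \<open>Points of L0 = <u,v> are written in the basis (u,v): the pair (a,b) stands for a*u + b*v.
  Hence u = (1,0), v = (0,1), w = -(u+v) = (-1,-1).\<close>

type_synonym pt = "int \<times> int"

definition padd :: "pt \<Rightarrow> pt \<Rightarrow> pt" where
  "padd x y = (fst x + fst y, snd x + snd y)"

definition psub :: "pt \<Rightarrow> pt \<Rightarrow> pt" where
  "psub x y = (fst x - fst y, snd x - snd y)"

definition uvec :: pt where "uvec = (1, 0)"
definition vvec :: pt where "vvec = (0, 1)"

definition full_rank_sublattice :: "pt set \<Rightarrow> bool" where
  "full_rank_sublattice L \<longleftrightarrow> (\<exists>p q :: pt.
      fst p * snd q - snd p * fst q \<noteq> 0 \<and>
      L = {(m * fst p + n * fst q, m * snd p + n * snd q) | m n :: int. True})"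

datatype loz = U | V | W

definition periodic_tiling :: "pt set \<Rightarrow> (pt \<Rightarrow> loz) \<Rightarrow> bool" where
  "periodic_tiling L T \<longleftrightarrow>
     (\<forall>x. \<forall>l\<in>L. T (padd x l) = T x) \<and>
     (\<forall>x. (T x = W \<and> T (padd x uvec) \<noteq> V \<and> T (psub x vvec) \<noteq> U) \<or>
          (T x \<noteq> W \<and> T (padd x uvec) = V \<and> T (psub x vvec) \<noteq> U) \<or>
          (T x \<noteq> W \<and> T (padd x uvec) \<noteq> V \<and> T (psub x vvec) = U))"

definition cosets :: "pt set \<Rightarrow> pt set set" where
  "cosets L = UNIV // {(x, y). psub x y \<in> L}"

definition type_count :: "pt set \<Rightarrow> (pt \<Rightarrow> loz) \<Rightarrow> loz \<Rightarrow> nat" where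
  "type_count L T t = card {C \<in> cosets L. \<exists>x\<in>C. T x = t}"

definition tiling_type :: "pt set \<Rightarrow> (pt \<Rightarrow> loz) \<Rightarrow> nat \<times> nat \<times> nat" where
  "tiling_type L T = (type_count L T U, type_count L T V, type_count L T W)"

text \<open>Every arrow of the triangular lattice is an edge of exactly one upward
  triangle x -> x+u -> x-v -> x; T x removes one of them:
  U removes x -> x+u, V removes x-v -> x, W removes x+u -> x-v.\<close>
definition arrow_in :: "(pt \<Rightarrow> loz) \<Rightarrow> pt \<Rightarrow> pt \<Rightarrow> bool" where
  "arrow_in T a b \<longleftrightarrow> (\<exists>x.
      (a = x \<and> b = padd x uvec \<and> T x \<noteq> U) \<or>
      (a = psub x vvec \<and> b = x \<and> T x \<noteq> V) \<or>
      (a = padd x uvec \<and> b = psub x vvec \<and> T x \<noteq> W))"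

definition is_source :: "(pt \<Rightarrow> loz) \<Rightarrow> pt \<Rightarrow> bool" where
  "is_source T z \<longleftrightarrow> (\<forall>a. \<not> arrow_in T a z)"

definition is_sink :: "(pt \<Rightarrow> loz) \<Rightarrow> pt \<Rightarrow> bool" where
  "is_sink T z \<longleftrightarrow> (\<forall>b. \<not> arrow_in T z b)"

text \<open>The three upward triangles containing z are those at z, z-u and z+v.  At a source
  they carry V, U, W respectively; at a sink they carry U, W, V.\<close>
definition set_conf :: "pt set \<Rightarrow> (pt \<Rightarrow> loz) \<Rightarrow> pt \<Rightarrow> loz \<Rightarrow> loz \<Rightarrow> loz \<Rightarrow> pt \<Rightarrow> loz" where
  "set_conf L T z a b c = (\<lambda>x.
      if psub x z \<in> L then a
      else if psub x (psub z uvec) \<in> L then b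
      else if psub x (padd z vvec) \<in> L then c
      else T x)"

definition flip :: "pt set \<Rightarrow> (pt \<Rightarrow> loz) \<Rightarrow> (pt \<Rightarrow> loz) \<Rightarrow> bool" where
  "flip L T T' \<longleftrightarrow> (\<exists>z.
      (is_source T z \<and> T' = set_conf L T z U W V) \<or>
      (is_sink T z \<and> T' = set_conf L T z V U W))"

definition flip_connected :: "pt set \<Rightarrow> (pt \<Rightarrow> loz) \<Rightarrow> (pt \<Rightarrow> loz) \<Rightarrow> bool" where
  "flip_connected L T1 T2 \<longleftrightarrow> (flip L)\<^sup>*\<^sup>* T1 T2"

end

theory Submission
  imports Defs "HOL-Library.Product_Plus"
begin

lemma padd_eq[simp]: "padd x y = x + y" by (simp add: padd_def plus_prod_def)
lemma psub_eq[simp]: "psub x y = x - y" by (simp add: psub_def minus_prod_def)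

definition per :: "pt set \<Rightarrow> (pt \<Rightarrow> 'a) \<Rightarrow> bool" where
  "per L f \<longleftrightarrow> (\<forall>x l. l \<in> L \<longrightarrow> f (x + l) = f x)"

lemma const2:
  fixes f :: "pt \<Rightarrow> 'a"
  assumes "\<And>x. f (x + uvec) = f x" "\<And>x. f (x + vvec) = f x"
  shows "f x = f 0"
proof -
  have A: "f (a, b) = f (0, b)" for a b
  proof (induction a rule: int_induct[where k=0])
    case base show ?case by simp
  next
    case (step1 i) then show ?case using assms(1)[of "(i,b)"] by (simp add: uvec_def)
  next
    case (step2 i) then show ?case using assms(1)[of "(i-1,b)"] by (simp add: uvec_def)
  qed
  have B: "f (0, b) = f (0, 0)" for b
  proof (induction b rule: int_induct[where k=0])
    case base show ?case by simp
  next
    case (step1 i) then show ?case using assms(2)[of "(0,i)"] by (simp add: vvec_def)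
  next
    case (step2 i) then show ?case using assms(2)[of "(0,i-1)"] by (simp add: vvec_def)
  qed
  obtain a b where "x = (a,b)" by fastforce
  then show ?thesis using A[of a b] B[of b] by (simp add: zero_prod_def)
qed

locale lat =
  fixes L :: "pt set" and p q :: pt
  assumes detnz: "fst p * snd q - snd p * fst q \<noteq> 0"
    and Ldef: "L = {(m * fst p + n * fst q, m * snd p + n * snd q) | m n :: int. True}"
begin

lemma memL: "l \<in> L \<longleftrightarrow> (\<exists>m n. l = (m * fst p + n * fst q, m * snd p + n * snd q))"
  using Ldef by auto

lemma L_add: "a \<in> L \<Longrightarrow> b \<in> L \<Longrightarrow> a + b \<in> L"
proof -
  assume "a \<in> L" "b \<in> L"
  then obtain m n m' n' where "a = (m * fst p + n * fst q, m * snd p + n * snd q)"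
    "b = (m' * fst p + n' * fst q, m' * snd p + n' * snd q)" unfolding memL by blast
  then show ?thesis unfolding memL
    by (intro exI[of _ "m+m'"] exI[of _ "n+n'"]) (simp add: algebra_simps)
qed

lemma L_uminus: "a \<in> L \<Longrightarrow> - a \<in> L"
  unfolding memL
  apply clarify
  subgoal for m n by (rule exI[of _ "-m"], rule exI[of _ "-n"]) (simp add: algebra_simps)
  done

lemma L_zero: "0 \<in> L"
  unfolding memL by (rule exI[of _ 0], rule exI[of _ 0]) (simp add: zero_prod_def)

lemma L_diff: "a \<in> L \<Longrightarrow> b \<in> L \<Longrightarrow> a - b \<in> L"
  using L_add[of a "-b"] L_uminus[of b] by simp

lemma L_diff_iff: "a - b \<in> L \<longleftrightarrow> b - a \<in> L"
  using L_uminus[of "a-b"] L_uminus[of "b-a"] by auto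

definition D :: int where "D = \<bar>fst p * snd q - snd p * fst q\<bar>"
definition box :: "pt set" where "box = {0..<D} \<times> {0..<D}"

lemma D_pos: "D > 0" using detnz by (simp add: D_def)
lemma finite_box: "finite box" by (simp add: box_def)

lemma DL: "(D * k, D * j) \<in> L"
proof (cases "fst p * snd q - snd p * fst q > 0")
  case True
  then have Dq: "D = fst p * snd q - snd p * fst q" by (simp add: D_def)
  show ?thesis unfolding memL Dq
    by (intro exI[of _ "k * snd q - j * fst q"] exI[of _ "j * fst p - k * snd p"]) (simp add: algebra_simps)
next
  case False
  then have Dq: "D = - (fst p * snd q - snd p * fst q)" by (simp add: D_def)
  show ?thesis unfolding memL Dq
    by (intro exI[of _ "- (k * snd q - j * fst q)"] exI[of _ "- (j * fst p - k * snd p)"]) (simp add: algebra_simps)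
qed

lemma to_box: "\<exists>b\<in>box. x - b \<in> L"
proof -
  obtain a c where x: "x = (a,c)" by fastforce
  have "(a mod D, c mod D) \<in> box" using D_pos by (simp add: box_def)
  moreover have "x - (a mod D, c mod D) = (D * (a div D), D * (c div D))"
    using x by (simp add: minus_mod_eq_mult_div)
  ultimately show ?thesis using DL by metis
qed

lemma per_box: "per L f \<Longrightarrow> \<exists>b\<in>box. f x = f b"
  using to_box[of x] unfolding per_def by (metis add_diff_cancel_left' diff_add_cancel)

lemma per_range: assumes "per L f" shows "range f = f ` box"
proof
  show "range f \<subseteq> f ` box" using per_box[OF assms] by blast
qed auto

end

definition du :: "(pt \<Rightarrow> loz) \<Rightarrow> pt \<Rightarrow> int" where
  "du T x = (if T x = U then -2 else 1)"
definition dv :: "(pt \<Rightarrow> loz) \<Rightarrow> pt \<Rightarrow> int" where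
  "dv T x = (if T (x + vvec) = V then -2 else 1)"
definition is_height :: "(pt \<Rightarrow> loz) \<Rightarrow> (pt \<Rightarrow> int) \<Rightarrow> bool" where
  "is_height T h \<longleftrightarrow> (\<forall>x. h (x + uvec) = h x + du T x) \<and> (\<forall>x. h (x + vvec) = h x + dv T x)"

lemma hu: "is_height T h \<Longrightarrow> h (x + uvec) = h x + du T x" unfolding is_height_def by blast
lemma hv: "is_height T h \<Longrightarrow> h (x + vvec) = h x + dv T x" unfolding is_height_def by blast

lemma hw: assumes "is_height T h"
  shows "h (x - vvec) = h (x + uvec) + (if T x = W then -2 else 1)"
proof -
  have 1: "h (x + uvec) = h x + du T x" using hu[OF assms] .
  have 2: "h x = h (x - vvec) + dv T (x - vvec)" using hv[OF assms, of "x - vvec"] by simp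
  show ?thesis using 1 2 by (cases "T x") (auto simp: du_def dv_def)
qed

lemma height_tiling_cond:
  assumes "is_height T h"
  shows "(T x = W \<and> T (padd x uvec) \<noteq> V \<and> T (psub x vvec) \<noteq> U) \<or>
          (T x \<noteq> W \<and> T (padd x uvec) = V \<and> T (psub x vvec) \<noteq> U) \<or>
          (T x \<noteq> W \<and> T (padd x uvec) \<noteq> V \<and> T (psub x vvec) = U)"
proof -
  have e1: "x - vvec + uvec = x + uvec - vvec" by (simp add: algebra_simps)
  have 1: "h (x + uvec - vvec) = h (x - vvec) + du T (x - vvec)" using hu[OF assms, of "x - vvec"] e1 by simp
  have 2: "h (x + uvec) = h (x + uvec - vvec) + dv T (x + uvec - vvec)" using hv[OF assms, of "x + uvec - vvec"] by simp
  have 3: "h (x - vvec) = h (x + uvec) + (if T x = W then -2 else 1)" using hw[OF assms] .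
  show ?thesis using 1 2 3 by (auto simp: du_def dv_def split: if_splits)
qed

lemma int_const1:
  fixes f :: "int \<Rightarrow> 'a"
  assumes "\<And>b. f (b + 1) = f b"
  shows "f b = f 0"
proof (induction b rule: int_induct[where k=0])
  case base show ?case by simp
next
  case (step1 i) then show ?case using assms[of i] by simp
next
  case (step2 i) then show ?case using assms[of "i-1"] by simp
qed

definition SS :: "(int \<Rightarrow> int) \<Rightarrow> int \<Rightarrow> int" where
  "SS f a = (\<Sum>i\<in>{0..<a}. f i) - (\<Sum>i\<in>{a..<0}. f i)"

lemma SS_step: "SS f (a + 1) = SS f a + f a"
proof (cases "a \<ge> 0")
  case True
  then have "{0..<a+1} = insert a {0..<a}" "{a+1..<0} = {}" "{a..<0} = {}" by auto
  then show ?thesis by (simp add: SS_def)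
next
  case False
  then have "{0..<a+1} = {}" "{0..<a} = {}" "{a..<0} = insert a {a+1..<0}" by auto
  then show ?thesis by (simp add: SS_def)
qed

lemma SS_zero: "SS f 0 = 0" by (simp add: SS_def)

lemma tiling_comm:
  assumes "periodic_tiling L T"
  shows "du T x + dv T (x + uvec) = dv T x + du T (x + vvec)"
proof -
  have c: "(T (x + vvec) = W \<and> T (x + vvec + uvec) \<noteq> V \<and> T x \<noteq> U) \<or>
          (T (x + vvec) \<noteq> W \<and> T (x + vvec + uvec) = V \<and> T x \<noteq> U) \<or>
          (T (x + vvec) \<noteq> W \<and> T (x + vvec + uvec) \<noteq> V \<and> T x = U)"
    using assms unfolding periodic_tiling_def by (metis padd_eq psub_eq add_diff_cancel_right')
  have e: "x + uvec + vvec = x + vvec + uvec" by (simp add: algebra_simps)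
  show ?thesis using c unfolding du_def dv_def e by (cases "T (x + vvec)") auto
qed

definition hh :: "(pt \<Rightarrow> loz) \<Rightarrow> pt \<Rightarrow> int" where
  "hh T x = SS (\<lambda>i. du T (i, 0)) (fst x) + SS (\<lambda>j. dv T (fst x, j)) (snd x)"

lemma height_exists:
  assumes "periodic_tiling L T"
  shows "is_height T (hh T)"
proof -
  have V: "hh T (x + vvec) = hh T x + dv T x" for x
    by (simp add: hh_def vvec_def SS_step)
  have U: "hh T (x + uvec) = hh T x + du T x" for x
  proof -
    obtain a b where x: "x = (a, b)" by fastforce
    define E where "E = (\<lambda>b. SS (\<lambda>j. dv T (a + 1, j)) b - SS (\<lambda>j. dv T (a, j)) b + du T (a, 0) - du T (a, b))"
    have "E (c + 1) = E c" for c
    proof -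
      have "du T (a, c) + dv T ((a, c) + uvec) = dv T (a, c) + du T ((a, c) + vvec)"
        using tiling_comm[OF assms] .
      then show ?thesis by (simp add: E_def SS_step uvec_def vvec_def)
    qed
    then have "E b = E 0" by (rule int_const1)
    then have "E b = 0" by (simp add: E_def SS_zero)
    then show ?thesis by (simp add: x hh_def E_def uvec_def SS_step)
  qed
  show ?thesis using U V by (simp add: is_height_def)
qed

lemma height_det:
  assumes "is_height T h" "is_height T' h"
  shows "T = T'"
proof
  fix x
  have 1: "du T x = du T' x" using hu[OF assms(1), of x] hu[OF assms(2), of x] by simp
  have 2: "dv T (x - vvec) = dv T' (x - vvec)" using hv[OF assms(1), of "x - vvec"] hv[OF assms(2), of "x - vvec"] by simp
  show "T x = T' x" using 1 2 by (cases "T x"; cases "T' x") (auto simp: du_def dv_def)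
qed

lemma sink_I: "T z = U \<Longrightarrow> T (z - uvec) = W \<Longrightarrow> T (z + vvec) = V \<Longrightarrow> is_sink T z"
  unfolding is_sink_def arrow_in_def
  by (auto simp: algebra_simps)

lemma source_I: "T z = V \<Longrightarrow> T (z - uvec) = U \<Longrightarrow> T (z + vvec) = W \<Longrightarrow> is_source T z"
  unfolding is_source_def arrow_in_def
  by (auto simp: algebra_simps)

context lat begin

lemma per_eq: "per L f \<Longrightarrow> x - y \<in> L \<Longrightarrow> f x = f y"
  unfolding per_def by (metis add_diff_cancel_left' diff_add_cancel)

lemma set_conf_eq: "set_conf L T z a b c x =
   (if x - z \<in> L then a else if x - (z - uvec) \<in> L then b else if x - (z + vvec) \<in> L then c else T x)"
  by (simp add: set_conf_def)

lemma per_set_conf: assumes "per L T" shows "per L (set_conf L T z a b c)"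
proof -
  have "(x + l - y \<in> L) = (x - y \<in> L)" if "l \<in> L" for x l y
  proof -
    have "x + l - y = (x - y) + l" "x - y = (x + l - y) - l" by (simp_all add: algebra_simps)
    then show ?thesis using L_add L_diff that by metis
  qed
  note key = this
  show ?thesis unfolding per_def
  proof (intro allI impI)
    fix x l assume l: "l \<in> L"
    have "T (x + l) = T x" using assms l unfolding per_def by blast
    then show "set_conf L T z a b c (x + l) = set_conf L T z a b c x"
      unfolding set_conf_eq using key[OF l, of x] by simp
  qed
qed

lemma periodic_per: "periodic_tiling L T \<Longrightarrow> per L T"
  unfolding periodic_tiling_def per_def padd_eq by blast

lemma per_height_tiling: "per L T \<Longrightarrow> is_height T h \<Longrightarrow> periodic_tiling L T"
  unfolding periodic_tiling_def using height_tiling_cond unfolding per_def padd_eq by blast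

definition lower :: "pt \<Rightarrow> (pt \<Rightarrow> int) \<Rightarrow> pt \<Rightarrow> int" where
  "lower z h = (\<lambda>x. if x - z \<in> L then h x - 3 else h x)"

lemma flip_sink:
  assumes per: "per L T" and ht: "is_height T h"
    and s1: "T z = U" and s2: "T (z - uvec) = W" and s3: "T (z + vvec) = V"
  defines "T' \<equiv> set_conf L T z V U W"
  shows "is_height T' (lower z h)" "periodic_tiling L T'" "flip L T T'" "flip L T' T"
proof -
  have nu: "uvec \<notin> L"
  proof
    assume "uvec \<in> L" then have "T z = T (z - uvec)" using per_eq[OF per] by simp
    then show False using s1 s2 by simp
  qed
  have nv: "vvec \<notin> L"
  proof
    assume "vvec \<in> L" then have "T (z + vvec) = T z" using per_eq[OF per] by simp
    then show False using s1 s3 by simp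
  qed
  have nuv: "uvec + vvec \<notin> L"
  proof
    assume "uvec + vvec \<in> L" then have "T (z + vvec) = T (z - uvec)" using per_eq[OF per]
      by (simp add: algebra_simps)
    then show False using s2 s3 by simp
  qed
  have cz: "T x = U" if "x - z \<in> L" for x using per_eq[OF per that] s1 by simp
  have czu: "T x = W" if "x - (z - uvec) \<in> L" for x using per_eq[OF per that] s2 by simp
  have czv: "T x = V" if "x - (z + vvec) \<in> L" for x using per_eq[OF per that] s3 by simp
  have nn: "- uvec \<notin> L" "- vvec \<notin> L" "- uvec - vvec \<notin> L"
  proof -
    have "- (- uvec - vvec) = uvec + vvec" by (simp add: algebra_simps)
    then show "- uvec \<notin> L" "- vvec \<notin> L" "- uvec - vvec \<notin> L"
      using L_uminus[of "- uvec"] L_uminus[of "- vvec"] L_uminus[of "- uvec - vvec"] nu nv nuv by (auto simp: add.commute)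
  qed
  have nd: "a - b \<notin> {uvec, vvec, uvec + vvec, - uvec, - vvec, - (uvec + vvec)}" if "a \<in> L" "b \<in> L" for a b
    using L_diff[OF that] L_uminus[OF L_diff[OF that]] nu nv nuv nn by auto
  have X: "\<not> (x - z \<in> L \<and> x - (z - uvec) \<in> L)" "\<not> (x - z \<in> L \<and> x - (z + vvec) \<in> L)"
     "\<not> (x - (z - uvec) \<in> L \<and> x - (z + vvec) \<in> L)" for x
  proof -
    have d: "(x - (z - uvec)) - (x - z) = uvec" "(x - z) - (x - (z + vvec)) = vvec"
       "(x - (z - uvec)) - (x - (z + vvec)) = uvec + vvec" by (simp_all add: algebra_simps)
    show "\<not> (x - z \<in> L \<and> x - (z - uvec) \<in> L)" using nd[of "x - (z - uvec)" "x - z"] d by auto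
    show "\<not> (x - z \<in> L \<and> x - (z + vvec) \<in> L)" using nd[of "x - z" "x - (z + vvec)"] d by auto
    show "\<not> (x - (z - uvec) \<in> L \<and> x - (z + vvec) \<in> L)" using nd[of "x - (z - uvec)" "x - (z + vvec)"] d by auto
  qed
  have U': "lower z h (x + uvec) = lower z h x + du T' x" for x
  proof -
    have e: "x + uvec - z = (x - (z - uvec))" by (simp add: algebra_simps)
    show ?thesis
      unfolding lower_def e du_def T'_def set_conf_eq hu[OF ht] du_def
      using cz czu czv X[of x] by auto
  qed
  have V': "lower z h (x + vvec) = lower z h x + dv T' x" for x
  proof -
    have e: "x + vvec - (z + vvec) = x - z" by (simp add: algebra_simps)
    show ?thesis
      unfolding lower_def e dv_def T'_def set_conf_eq hv[OF ht] dv_def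
      using cz czu czv X[of "x + vvec"] X[of x] by auto
  qed
  show ht': "is_height T' (lower z h)" using U' V' unfolding is_height_def by blast
  show "periodic_tiling L T'" using per_height_tiling[OF _ ht'] per_set_conf[OF per] unfolding T'_def by blast
  have "is_sink T z" using sink_I s1 s2 s3 by blast
  then show "flip L T T'" unfolding flip_def T'_def by blast
  have z0: "z - z \<in> L" using L_zero by simp
  have "is_source T' z"
  proof (rule source_I)
    show "T' z = V" unfolding T'_def set_conf_eq using z0 by simp
    have "z - uvec - z = - uvec" "z - uvec - (z - uvec) = 0" by simp_all
    then show "T' (z - uvec) = U" unfolding T'_def set_conf_eq using nn L_zero by simp
    have "z + vvec - z = vvec" "z + vvec - (z - uvec) = uvec + vvec" "z + vvec - (z + vvec) = 0"
      by (simp_all add: algebra_simps)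
    then show "T' (z + vvec) = W" unfolding T'_def set_conf_eq using nv nuv L_zero by (simp add: add.commute)
  qed
  moreover have "T = set_conf L T' z U W V"
  proof
    fix x
    show "T x = set_conf L T' z U W V x"
      unfolding T'_def set_conf_eq
      using cz czu czv X[of x] by auto
  qed
  ultimately show "flip L T' T" unfolding flip_def by blast
qed

end

locale lat2 = lat +
  fixes N Su Sv :: int
  assumes Npos: "N > 0" and Su_lt: "Su < N" and Sv_lt: "Sv < N" and Sw_lt: "- Su - Sv < N"
begin

definition good :: "(pt \<Rightarrow> loz) \<Rightarrow> (pt \<Rightarrow> int) \<Rightarrow> bool" where
  "good T h \<longleftrightarrow> periodic_tiling L T \<and> is_height T h \<and>
     (\<forall>x l. l \<in> L \<longrightarrow> N * (h (x + l) - h x) = fst l * Su + snd l * Sv)"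

definition mu :: "(pt \<Rightarrow> int) \<Rightarrow> (pt \<Rightarrow> int) \<Rightarrow> nat" where
  "mu h h' = (\<Sum>b\<in>box. nat \<bar>h b - h' b\<bar>)"

lemma good_flux: "good T h \<Longrightarrow> l \<in> L \<Longrightarrow> N * (h (x + l) - h x) = fst l * Su + snd l * Sv"
  unfolding good_def by blast

lemma delta_per: assumes "good T h" "good T' h'" shows "per L (\<lambda>x. h x - h' x)"
  unfolding per_def
proof (intro allI impI)
  fix x l assume l: "l \<in> L"
  have "N * ((h (x + l) - h' (x + l)) - (h x - h' x)) = 0"
    using good_flux[OF assms(1) l, of x] good_flux[OF assms(2) l, of x] by (simp add: algebra_simps)
  then show "h (x + l) - h' (x + l) = h x - h' x" using Npos by simp
qed

lemma G_per: assumes "good T h" shows "per L (\<lambda>x. N * h x - (fst x * Su + snd x * Sv))"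
  unfolding per_def
proof (intro allI impI)
  fix x l assume l: "l \<in> L"
  show "N * h (x + l) - (fst (x + l) * Su + snd (x + l) * Sv) = N * h x - (fst x * Su + snd x * Sv)"
    using good_flux[OF assms l, of x] by (simp add: algebra_simps)
qed

lemma key:
  assumes g: "good T h" and g': "good T' h'" and pos: "h x0 - h' x0 > 0"
  shows "\<exists>z. T z = U \<and> T (z - uvec) = W \<and> T (z + vvec) = V \<and> h z - h' z > 0"
proof -
  define d where "d = (\<lambda>x. h x - h' x)"
  define G where "G = (\<lambda>x. N * h x - (fst x * Su + snd x * Sv))"
  have dper: "per L d" unfolding d_def using delta_per[OF g g'] .
  have Gper: "per L G" unfolding G_def using G_per[OF g] .
  have ht: "is_height T h" and ht': "is_height T' h'" using g g' unfolding good_def by auto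
  define M where "M = Max (d ` box)"
  have fin: "finite (d ` box)" using finite_box by simp
  have dle: "d x \<le> M" for x
    using per_box[OF dper, of x] fin unfolding M_def by (metis Max_ge imageI)
  have "box \<noteq> {}" using per_box[OF dper] by blast
  then have "M \<in> d ` box" unfolding M_def using fin by simp
  then obtain b0 where b0: "b0 \<in> box" "d b0 = M" by auto
  define S where "S = {b \<in> box. d b = M}"
  have finS: "finite S" using finite_box unfolding S_def by simp
  have "b0 \<in> S" using b0 unfolding S_def by simp
  then have "Max (G ` S) \<in> G ` S" using finS by (intro Max_in) auto
  then obtain z where z: "z \<in> S" "G z = Max (G ` S)" by auto
  have dz: "d z = M" using z unfolding S_def by simp
  have Gle: "G y \<le> G z" if "d y = M" for y
  proof -
    obtain b where b: "b \<in> box" "y - b \<in> L" using to_box by blast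
    have "d b = M" using per_eq[OF dper b(2)] that by simp
    then have "b \<in> S" using b unfolding S_def by simp
    then have "G b \<le> G z" using z finS by simp
    then show ?thesis using per_eq[OF Gper b(2)] by simp
  qed
  have Mpos: "M > 0" using dle[of x0] pos unfolding d_def by simp
  have A: "T z = U"
  proof (rule ccontr)
    assume "T z \<noteq> U"
    then have 1: "h (z + uvec) = h z + 1" using hu[OF ht, of z] by (simp add: du_def)
    have 2: "h' (z + uvec) = h' z + du T' z" using hu[OF ht'] .
    have "d (z + uvec) = M"
      using dle[of "z + uvec"] dz 1 2 unfolding d_def du_def by (auto split: if_splits)
    then have "G (z + uvec) \<le> G z" by (rule Gle)
    then show False using 1 Su_lt unfolding G_def by (simp add: uvec_def algebra_simps)
  qed
  have B: "T (z + vvec) = V"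
  proof (rule ccontr)
    assume "T (z + vvec) \<noteq> V"
    then have 1: "h (z + vvec) = h z + 1" using hv[OF ht, of z] by (simp add: dv_def)
    have 2: "h' (z + vvec) = h' z + dv T' z" using hv[OF ht'] .
    have "d (z + vvec) = M"
      using dle[of "z + vvec"] dz 1 2 unfolding d_def dv_def by (auto split: if_splits)
    then have "G (z + vvec) \<le> G z" by (rule Gle)
    then show False using 1 Sv_lt unfolding G_def by (simp add: vvec_def algebra_simps)
  qed
  have C: "T (z - uvec) = W"
  proof (rule ccontr)
    assume a: "T (z - uvec) \<noteq> W"
    have e: "z - uvec + uvec = z" by simp
    have 1: "h (z - uvec - vvec) = h z + 1" using hw[OF ht, of "z - uvec"] a by simp
    have 2: "h' (z - uvec - vvec) = h' z + (if T' (z - uvec) = W then -2 else 1)"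
      using hw[OF ht', of "z - uvec"] by simp
    have "d (z - uvec - vvec) = M"
      using dle[of "z - uvec - vvec"] dz 1 2 unfolding d_def by (auto split: if_splits)
    then have "G (z - uvec - vvec) \<le> G z" by (rule Gle)
    then show False using 1 Sw_lt unfolding G_def by (simp add: uvec_def vvec_def algebra_simps)
  qed
  have "h z - h' z > 0" using dz Mpos unfolding d_def by simp
  then show ?thesis using A B C by blast
qed

end

context lat2 begin

lemma step:
  assumes g: "good T h" and g': "good T' h'" and d3: "\<forall>x. 3 dvd (h x - h' x)"
    and s1: "T z = U" and s2: "T (z - uvec) = W" and s3: "T (z + vvec) = V" and pz: "h z - h' z > 0"
  shows "good (set_conf L T z V U W) (lower z h)" "\<forall>x. 3 dvd (lower z h x - h' x)"
    "mu (lower z h) h' < mu h h'" "flip L T (set_conf L T z V U W)" "flip L (set_conf L T z V U W) T"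
proof -
  have per: "per L T" using g periodic_per unfolding good_def by blast
  have ht: "is_height T h" using g unfolding good_def by blast
  note F = flip_sink[OF per ht s1 s2 s3]
  show "flip L T (set_conf L T z V U W)" "flip L (set_conf L T z V U W) T" using F(3,4) by auto
  have key: "(x + l - z \<in> L) = (x - z \<in> L)" if "l \<in> L" for x l
  proof -
    have "x + l - z = (x - z) + l" "x - z = (x + l - z) - l" by (simp_all add: algebra_simps)
    then show ?thesis using L_add L_diff that by metis
  qed
  have "N * (lower z h (x + l) - lower z h x) = fst l * Su + snd l * Sv" if "l \<in> L" for x l
    using good_flux[OF g that, of x] key[OF that, of x] unfolding lower_def by auto
  then show "good (set_conf L T z V U W) (lower z h)" unfolding good_def using F(1,2) by blast
  show "\<forall>x. 3 dvd (lower z h x - h' x)"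
  proof
    fix x
    have "3 dvd (h x - h' x)" using d3 by blast
    show "3 dvd (lower z h x - h' x)"
    proof (cases "x - z \<in> L")
      case True
      then have "lower z h x - h' x = (h x - h' x) - 3" by (simp add: lower_def)
      then show ?thesis using \<open>3 dvd (h x - h' x)\<close> by (metis dvd_diff dvd_refl)
    next
      case False
      then show ?thesis using \<open>3 dvd (h x - h' x)\<close> by (simp add: lower_def)
    qed
  qed
  have dper: "per L (\<lambda>x. h x - h' x)" using delta_per[OF g g'] .
  have le: "nat \<bar>lower z h b - h' b\<bar> \<le> nat \<bar>h b - h' b\<bar>" 
    and lt: "b - z \<in> L \<Longrightarrow> nat \<bar>lower z h b - h' b\<bar> < nat \<bar>h b - h' b\<bar>" for b
  proof -
    have c: "h b - h' b \<ge> 3" if "b - z \<in> L"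
    proof -
      have "h b - h' b = h z - h' z" using per_eq[OF dper that] by simp
      moreover have "3 dvd (h z - h' z)" using d3 by blast
      ultimately show ?thesis using pz by (auto elim!: dvdE)
    qed
    show "nat \<bar>lower z h b - h' b\<bar> \<le> nat \<bar>h b - h' b\<bar>" unfolding lower_def using c by auto
    show "b - z \<in> L \<Longrightarrow> nat \<bar>lower z h b - h' b\<bar> < nat \<bar>h b - h' b\<bar>" unfolding lower_def using c by auto
  qed
  obtain b where b: "b \<in> box" "z - b \<in> L" using to_box by blast
  have "b - z \<in> L" using b(2) L_diff_iff by blast
  then show "mu (lower z h) h' < mu h h'" unfolding mu_def
    using finite_box le lt[OF \<open>b - z \<in> L\<close>] b(1) by (intro sum_strict_mono_ex1) blast+
qed

lemma main:
  shows "good T h \<Longrightarrow> good T' h' \<Longrightarrow> \<forall>x. 3 dvd (h x - h' x) \<Longrightarrow> (flip L)\<^sup>*\<^sup>* T T'"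
proof (induction "mu h h'" arbitrary: T h T' h' rule: less_induct)
  case less
  show ?case
  proof (cases "\<exists>x. h x - h' x > 0")
    case True
    then obtain x0 where "h x0 - h' x0 > 0" by blast
    from key[OF less(2,3) this] obtain z where z: "T z = U" "T (z - uvec) = W" "T (z + vvec) = V" "h z - h' z > 0"
      by blast
    note S = step[OF less(2,3,4) z]
    have "(flip L)\<^sup>*\<^sup>* (set_conf L T z V U W) T'" using less(1)[OF S(3) S(1) less(3) S(2)] .
    with S(4) show ?thesis by (rule converse_rtranclp_into_rtranclp)
  next
    case False
    show ?thesis
    proof (cases "\<exists>x. h' x - h x > 0")
      case True
      then obtain x0 where "h' x0 - h x0 > 0" by blast
      from key[OF less(3,2) this] obtain z where z: "T' z = U" "T' (z - uvec) = W" "T' (z + vvec) = V" "h' z - h z > 0"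
        by blast
      have d3': "\<forall>x. 3 dvd (h' x - h x)" using less(4) by (metis dvd_minus_iff minus_diff_eq)
      note S = step[OF less(3,2) d3' z]
      have musym: "mu a b = mu b a" for a b unfolding mu_def by (simp add: abs_minus_commute)
      have d3'': "\<forall>x. 3 dvd (h x - lower z h' x)" using S(2) by (metis dvd_minus_iff minus_diff_eq)
      have "mu h (lower z h') < mu h h'" using S(3) musym by metis
      then have "(flip L)\<^sup>*\<^sup>* T (set_conf L T' z V U W)" using less(1)[OF _ less(2) S(1) d3''] by blast
      then show ?thesis using S(5) by (metis rtranclp.rtrancl_into_rtrancl)
    next
      case False2: False
      have "h = h'"
      proof
        fix x show "h x = h' x" using False False2 by (metis diff_gt_0_iff_gt linorder_neqE)
      qed
      then have "T = T'" using height_det less(2,3) unfolding good_def by blast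
      then show ?thesis by simp
    qed
  qed
qed

end

lemma count_sum:
  assumes "finite A"
  shows "(\<Sum>C\<in>A. (if P C then -2 else 1 :: int)) = int (card A) - 3 * int (card {C\<in>A. P C})"
proof -
  have "(\<Sum>C\<in>A. (if P C then -2 else 1 :: int)) = (\<Sum>C\<in>A. 1 - 3 * of_bool (P C))"
    by (rule sum.cong) auto
  also have "\<dots> = int (card A) - 3 * (\<Sum>C\<in>A. of_bool (P C))"
    by (simp add: sum_subtractf sum_distrib_left)
  also have "(\<Sum>C\<in>A. of_bool (P C) :: int) = int (card (A \<inter> {x. P x}))"
    using assms by simp
  also have "A \<inter> {x. P x} = {C\<in>A. P C}" by auto
  finally show ?thesis .
qed

context lat begin

definition cls :: "pt \<Rightarrow> pt set" where "cls x = {y. y - x \<in> L}"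
definition rep :: "pt set \<Rightarrow> pt" where "rep C = (SOME x. x \<in> C)"

lemma cosets_eq: "cosets L = range cls"
  unfolding cosets_def quotient_def cls_def using L_diff_iff by auto

lemma self_cls: "x \<in> cls x" unfolding cls_def using L_zero by simp

lemma cls_eq_iff: "cls x = cls y \<longleftrightarrow> x - y \<in> L"
proof
  assume "cls x = cls y" then show "x - y \<in> L" using self_cls[of x] unfolding cls_def by auto
next
  assume a: "x - y \<in> L"
  have "z - x \<in> L \<longleftrightarrow> z - y \<in> L" for z
  proof -
    have "z - y = (z - x) + (x - y)" "z - x = (z - y) - (x - y)" by (simp_all add: algebra_simps)
    then show ?thesis using L_add L_diff a by metis
  qed
  then show "cls x = cls y" unfolding cls_def by auto
qed

lemma rep_cls: "rep (cls x) - x \<in> L"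
proof -
  have "rep (cls x) \<in> cls x" unfolding rep_def using self_cls by (rule someI)
  then show ?thesis unfolding cls_def by simp
qed

lemma cls_rep: assumes "C \<in> range cls" shows "cls (rep C) = C"
proof -
  obtain x where x: "C = cls x" using assms by blast
  show ?thesis unfolding x cls_eq_iff by (rule rep_cls)
qed

lemma per_cls: "per L cls"
  unfolding per_def using cls_eq_iff by simp

lemma finite_cls: "finite (range cls)"
  using per_range[OF per_cls] finite_box by simp

lemma sum_shift:
  assumes f: "per L f"
  shows "(\<Sum>C\<in>range cls. f (rep C + y)) = (\<Sum>C\<in>range cls. f (rep C))"
proof (rule sum.reindex_bij_witness[where j = "\<lambda>C. cls (rep C + y)" and i = "\<lambda>C. cls (rep C - y)"])
  fix a assume "a \<in> range cls"
  then obtain x where a: "a = cls x" by auto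
  have r1: "rep (cls (rep a + y)) - (rep a + y) \<in> L" by (rule rep_cls)
  have eq: "rep (cls (rep a + y)) - y - rep a = rep (cls (rep a + y)) - (rep a + y)" by (simp add: algebra_simps)
  have "cls (rep (cls (rep a + y)) - y) = cls (rep a)" unfolding cls_eq_iff eq by (rule r1)
  then show "cls (rep (cls (rep a + y)) - y) = a" using cls_rep \<open>a \<in> range cls\<close> by simp
  show "cls (rep a + y) \<in> range cls" by simp
  show "f (rep (cls (rep a + y))) = f (rep a + y)" using per_eq[OF f r1] .
next
  fix b assume "b \<in> range cls"
  have r1: "rep (cls (rep b - y)) - (rep b - y) \<in> L" by (rule rep_cls)
  have eq: "rep (cls (rep b - y)) + y - rep b = rep (cls (rep b - y)) - (rep b - y)" by (simp add: algebra_simps)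
  have "cls (rep (cls (rep b - y)) + y) = cls (rep b)" unfolding cls_eq_iff eq by (rule r1)
  then show "cls (rep (cls (rep b - y)) + y) = b" using cls_rep \<open>b \<in> range cls\<close> by simp
  show "cls (rep b - y) \<in> range cls" by simp
qed

definition SuT :: "(pt \<Rightarrow> loz) \<Rightarrow> int" where "SuT T = (\<Sum>C\<in>range cls. du T (rep C))"
definition SvT :: "(pt \<Rightarrow> loz) \<Rightarrow> int" where "SvT T = (\<Sum>C\<in>range cls. dv T (rep C))"

lemma per_du: "per L T \<Longrightarrow> per L (du T)"
  unfolding per_def du_def by simp
lemma per_dv: "per L T \<Longrightarrow> per L (dv T)"
  unfolding per_def dv_def by (metis add.commute add.left_commute)

lemma flux:
  assumes pt: "periodic_tiling L T" and ht: "is_height T h" and l: "l \<in> L"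
  shows "int (card (range cls)) * (h (x + l) - h x) = fst l * SuT T + snd l * SvT T"
proof -
  have per: "per L T" using periodic_per[OF pt] .
  define k where "k = (\<lambda>x. h (x + l) - h x)"
  have ku: "k (x + uvec) = k x" for x
  proof -
    have e: "x + uvec + l = x + l + uvec" by (simp add: algebra_simps)
    have "du T (x + l) = du T x" using per_du[OF per] l unfolding per_def by blast
    then show ?thesis unfolding k_def e hu[OF ht] by simp
  qed
  have kv: "k (x + vvec) = k x" for x
  proof -
    have e: "x + vvec + l = x + l + vvec" by (simp add: algebra_simps)
    have "dv T (x + l) = dv T x" using per_dv[OF per] l unfolding per_def by blast
    then show ?thesis unfolding k_def e hv[OF ht] by simp
  qed
  have kc: "k x = k 0" for x using const2[of k, OF ku kv] .
  define F where "F = (\<lambda>y. \<Sum>C\<in>range cls. h (rep C + y) - h (rep C))"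
  have Fu: "F (y + uvec) = F y + SuT T" for y
  proof -
    have "F (y + uvec) = (\<Sum>C\<in>range cls. (h (rep C + y) - h (rep C)) + du T (rep C + y))"
      unfolding F_def by (rule sum.cong) (simp_all add: add.assoc[symmetric] hu[OF ht])
    also have "\<dots> = F y + (\<Sum>C\<in>range cls. du T (rep C + y))" unfolding F_def by (simp add: sum.distrib)
    also have "(\<Sum>C\<in>range cls. du T (rep C + y)) = SuT T" unfolding SuT_def by (rule sum_shift[OF per_du[OF per]])
    finally show ?thesis .
  qed
  have Fv: "F (y + vvec) = F y + SvT T" for y
  proof -
    have "F (y + vvec) = (\<Sum>C\<in>range cls. (h (rep C + y) - h (rep C)) + dv T (rep C + y))"
      unfolding F_def by (rule sum.cong) (simp_all add: add.assoc[symmetric] hv[OF ht])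
    also have "\<dots> = F y + (\<Sum>C\<in>range cls. dv T (rep C + y))" unfolding F_def by (simp add: sum.distrib)
    also have "(\<Sum>C\<in>range cls. dv T (rep C + y)) = SvT T" unfolding SvT_def by (rule sum_shift[OF per_dv[OF per]])
    finally show ?thesis .
  qed
  define G where "G = (\<lambda>y. F y - (fst y * SuT T + snd y * SvT T))"
  have "G (y + uvec) = G y" for y unfolding G_def using Fu[of y] by (simp add: uvec_def algebra_simps)
  moreover have "G (y + vvec) = G y" for y unfolding G_def using Fv[of y] by (simp add: vvec_def algebra_simps)
  ultimately have "G l = G 0" by (rule const2)
  moreover have "G 0 = 0" unfolding G_def F_def by simp
  ultimately have "F l = fst l * SuT T + snd l * SvT T" unfolding G_def by simp
  moreover have "F l = (\<Sum>C\<in>range cls. k x)" unfolding F_def k_def using kc unfolding k_def by simp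
  ultimately show ?thesis unfolding k_def by simp
qed

lemma type_count_eq:
  assumes "per L T"
  shows "type_count L T t = card {C \<in> range cls. T (rep C) = t}"
proof -
  have "{C \<in> cosets L. \<exists>x\<in>C. T x = t} = {C \<in> range cls. T (rep C) = t}"
  proof (rule Collect_cong)
    fix C show "(C \<in> cosets L \<and> (\<exists>x\<in>C. T x = t)) = (C \<in> range cls \<and> T (rep C) = t)"
    proof (cases "C \<in> range cls")
      case True
      have "T x = T (rep C)" if "x \<in> C" for x
      proof -
        have "x \<in> cls (rep C)" using that cls_rep[OF True] by simp
        then show ?thesis using per_eq[OF assms] unfolding cls_def by blast
      qed
      moreover have "rep C \<in> C" using self_cls[of "rep C"] cls_rep[OF True] by simp
      ultimately have "(\<exists>x\<in>C. T x = t) = (T (rep C) = t)" by metis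
      moreover have "C \<in> cosets L" using True unfolding cosets_eq .
      ultimately show ?thesis using True by blast
    next
      case False then show ?thesis unfolding cosets_eq by blast
    qed
  qed
  then show ?thesis unfolding type_count_def by simp
qed

lemma SuT_eq: assumes "per L T" shows "SuT T = int (card (range cls)) - 3 * int (type_count L T U)"
proof -
  have "SuT T = (\<Sum>C\<in>range cls. if T (rep C) = U then -2 else 1)" unfolding SuT_def du_def by (rule refl)
  also have "\<dots> = int (card (range cls)) - 3 * int (card {C \<in> range cls. T (rep C) = U})"
    by (rule count_sum[OF finite_cls])
  also have "card {C \<in> range cls. T (rep C) = U} = type_count L T U" by (rule type_count_eq[OF assms, symmetric])
  finally show ?thesis .
qed

lemma SvT_eq: assumes "per L T" shows "SvT T = int (card (range cls)) - 3 * int (type_count L T V)"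
proof -
  have pv: "per L (\<lambda>x. if T x = V then -2 else (1::int))" using assms unfolding per_def by simp
  have "SvT T = (\<Sum>C\<in>range cls. (\<lambda>x. if T x = V then -2 else (1::int)) (rep C + vvec))"
    unfolding SvT_def dv_def by (rule refl)
  also have "\<dots> = (\<Sum>C\<in>range cls. (\<lambda>x. if T x = V then -2 else (1::int)) (rep C))"
    by (rule sum_shift[OF pv])
  also have "\<dots> = int (card (range cls)) - 3 * int (card {C \<in> range cls. T (rep C) = V})"
    by (rule count_sum[OF finite_cls])
  also have "card {C \<in> range cls. T (rep C) = V} = type_count L T V" by (rule type_count_eq[OF assms, symmetric])
  finally show ?thesis .
qed

lemma card_types: assumes "per L T"
  shows "type_count L T U + type_count L T V + type_count L T W = card (range cls)"
proof -
  let ?A = "\<lambda>t. {C \<in> range cls. T (rep C) = t}"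
  have e: "T (rep C) = U \<or> T (rep C) = V \<or> T (rep C) = W" for C by (cases "T (rep C)") auto
  have 1: "range cls = ?A U \<union> ?A V \<union> ?A W" using e by blast
  have 2: "card (?A U \<union> ?A V \<union> ?A W) = card (?A U) + card (?A V) + card (?A W)"
  proof -
    have f: "finite (?A t)" for t using finite_cls by simp
    have "card (?A U \<union> ?A V \<union> ?A W) = card (?A U \<union> ?A V) + card (?A W)"
      by (rule card_Un_disjoint) (use f in auto)
    moreover have "card (?A U \<union> ?A V) = card (?A U) + card (?A V)"
      by (rule card_Un_disjoint) (use f in auto)
    ultimately show ?thesis by simp
  qed
  have "card (range cls) = card (?A U) + card (?A V) + card (?A W)"
    using arg_cong[OF 1, of card] 2 by (rule trans)
  then show ?thesis unfolding type_count_eq[OF assms] by (rule sym)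
qed

end

theorem theorem6p41:
  fixes L1 :: "pt set" and T1 T2 :: "pt \<Rightarrow> loz" and g1 g2 g3 :: nat
  assumes "full_rank_sublattice L1"
    and "periodic_tiling L1 T1" and "periodic_tiling L1 T2"
    and "tiling_type L1 T1 = (g1, g2, g3)" and "tiling_type L1 T2 = (g1, g2, g3)"
    and "g1 > 0" and "g2 > 0" and "g3 > 0"
  shows "flip_connected L1 T1 T2"
proof -
  obtain p q where pq: "fst p * snd q - snd p * fst q \<noteq> 0"
      "L1 = {(m * fst p + n * fst q, m * snd p + n * snd q) | m n :: int. True}"
    using assms(1) unfolding full_rank_sublattice_def by blast
  interpret lat L1 p q using pq by unfold_locales
  have per1: "per L1 T1" and per2: "per L1 T2" using assms(2,3) periodic_per by auto
  have t1: "type_count L1 T1 U = g1" "type_count L1 T1 V = g2" "type_count L1 T1 W = g3"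
    using assms(4) unfolding tiling_type_def by auto
  have t2: "type_count L1 T2 U = g1" "type_count L1 T2 V = g2" "type_count L1 T2 W = g3"
    using assms(5) unfolding tiling_type_def by auto
  define N where "N = int (card (range cls))"
  define Su where "Su = N - 3 * int g1"
  define Sv where "Sv = N - 3 * int g2"
  have Neq: "N = int g1 + int g2 + int g3" using card_types[OF per1] t1 unfolding N_def by simp
  interpret lat2 L1 p q N Su Sv
    by unfold_locales (use Neq assms(6,7,8) in \<open>simp_all add: Su_def Sv_def\<close>)
  have good: "good T (hh T)" if pt: "periodic_tiling L1 T" and tT: "type_count L1 T U = g1" "type_count L1 T V = g2" for T
  proof -
    have per: "per L1 T" using periodic_per[OF pt] .
    have ht: "is_height T (hh T)" by (rule height_exists[OF pt])
    have "SuT T = Su" using SuT_eq[OF per] tT unfolding Su_def N_def by simp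
    moreover have "SvT T = Sv" using SvT_eq[OF per] tT unfolding Sv_def N_def by simp
    ultimately have "N * (hh T (x + l) - hh T x) = fst l * Su + snd l * Sv" if "l \<in> L1" for x l
      using flux[OF pt ht that, of x] unfolding N_def by simp
    then show ?thesis unfolding good_def using pt ht by blast
  qed
  have g1': "good T1 (hh T1)" using good[OF assms(2) t1(1,2)] .
  have g2': "good T2 (hh T2)" using good[OF assms(3) t2(1,2)] .
  have ht1: "is_height T1 (hh T1)" and ht2: "is_height T2 (hh T2)" using g1' g2' unfolding good_def by auto
  define k where "k = (\<lambda>x. (hh T1 x - hh T2 x) mod 3)"
  have ku: "k (x + uvec) = k x" for x
    unfolding k_def hu[OF ht1] hu[OF ht2] by (auto simp: du_def split: if_split; presburger)
  have kv: "k (x + vvec) = k x" for x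
    unfolding k_def hv[OF ht1] hv[OF ht2] by (auto simp: dv_def split: if_split; presburger)
  have k0: "k 0 = 0" unfolding k_def hh_def by (simp add: SS_zero)
  have d3: "\<forall>x. 3 dvd (hh T1 x - hh T2 x)"
  proof
    fix x have "k x = 0" using const2[of k, OF ku kv] k0 by simp
    then show "3 dvd (hh T1 x - hh T2 x)" unfolding k_def by (simp add: dvd_eq_mod_eq_0)
  qed
  show ?thesis unfolding flip_connected_def using main[OF g1' g2' d3] .
qed

end
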